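(* Let $d,K\in\mathbb{N}$, $\mathbb{T}^d=(\mathbb{R}/\mathbb{Z})^d$, $E:\mathbb{T}^d\to\mathbb{R}^d$ of class $\mathcal{C}^\infty$, and $\sigma_1,\ldots,\sigma_K:\mathbb{T}^d\times\mathbb{R}^d\to\mathbb{R}$ bounded and of class $\mathcal{C}^\infty$. Let $f_0$ be non-random, $\tau\in(0,1)$, $t_n=n\tau$, $\delta\beta_{n,k}=\beta_k(t_{n+1})-\beta_k(t_n)$. Define $f_0^{\rm mS}=f_0$ and for $n\ge0$ $$\hat f_{n+1}^{\rm mS}=S^2(\tau)S^1(\tau)f_n^{\rm mS},\qquad f_{n+1}^{\rm mS}(x,v)=\exp\Big(\sum_{k=1}^K\sigma_k(x,v)\delta\beta_{n,k}\Big)\hat f_{n+1}^{\rm mS}(x,v),$$ where $S^1(\tau)f(x,v)=f(x-\tau v,v)$ and $S^2(\tau)f(x,v)=f(x,v-\tau E(x))$. Then: (i) (Positivity) If $f_0\ge0$ on $\mathbb{T}^d\times\mathbb{R}^d$, then for any $\tau\in(0,1)$, $f_n^{\rm mS}(x,v)\ge0$ almost surely for every $n\ge0$ and all $(x,v)$. (ii) ($L^2$ norm) If $f_0\in L^2_{x,v}$ and there is a real $\sigma$ with $\sum_{k=1}^K\sigma_k(x,v)^2=\sigma^2$ for all $(x,v)$, then $f_n^{\rm mS}\in L^2(\Omega,L^2_{x,v})$ for all $n\ge0$ and $\mathbb{E}[\|f_n^{\rm mS}\|_{L^2_{x,v}}^2]=e^{2\sigma^2t_n}\|f_0\|_{L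^2_{x,v}}^2$.
   Context: $\beta_1,\ldots,\beta_K$ are independent standard real-valued Wiener processes on a filtered probability space. $L^p_{x,v}=L^p(\mathbb{T}^d\times\mathbb{R}^d)$ for Lebesgue measure. *)

theory Defs
  imports "HOL-Analysis.Analysis" "HOL-Probability.Probability"
begin

text \<open>C-infinity regularity: differentiable everywhere, and every partial
derivative (in each basis direction) is again C-infinity (coinductively,
i.e. all iterated partial derivatives exist everywhere).\<close>
coinductive smooth_fun :: "('a::euclidean_space \<Rightarrow> real) \<Rightarrow> bool" where
  "(\<forall>x. f differentiable (at x)) \<Longrightarrow>
   (\<forall>b\<in>Basis. smooth_fun (\<lambda>x. frechet_derivative f (at x) b)) \<Longrightarrow> smooth_fun f"

text \<open>Functions on the torus T^d represented as 1-periodic functions on R^d.\<close>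
definition int_vec :: "real^'d \<Rightarrow> bool" where
  "int_vec z \<longleftrightarrow> (\<forall>i. z $ i \<in> \<int>)"

definition periodic_x :: "(real^'d \<Rightarrow> 'b \<Rightarrow> 'c) \<Rightarrow> bool" where
  "periodic_x f \<longleftrightarrow> (\<forall>x v z. int_vec z \<longrightarrow> f (x + z) v = f x v)"

definition periodic_fun :: "(real^'d \<Rightarrow> 'c) \<Rightarrow> bool" where
  "periodic_fun g \<longleftrightarrow> (\<forall>x z. int_vec z \<longrightarrow> g (x + z) = g x)"

text \<open>Lebesgue measure on T^d x R^d (fundamental domain [0,1]^d for the torus).\<close>
definition mu_xv :: "((real^'d) \<times> (real^'d)) measure" where
  "mu_xv = restrict_space (lborel \<Otimes>\<^sub>M lborel) (cbox 0 One \<times> UNIV)"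

definition in_L2xv :: "(real^'d \<Rightarrow> real^'d \<Rightarrow> real) \<Rightarrow> bool" where
  "in_L2xv f \<longleftrightarrow> case_prod f \<in> borel_measurable mu_xv \<and>
     integrable mu_xv (\<lambda>(x,v). (f x v)\<^sup>2)"

definition L2xv_sq :: "(real^'d \<Rightarrow> real^'d \<Rightarrow> real) \<Rightarrow> real" where
  "L2xv_sq f = (\<integral>p. (case_prod f p)\<^sup>2 \<partial>mu_xv)"

definition std_wiener :: "'w measure \<Rightarrow> (real \<Rightarrow> 'w \<Rightarrow> real) \<Rightarrow> bool" where
  "std_wiener M W \<longleftrightarrow>
     (\<forall>t. W t \<in> borel_measurable M) \<and>
     (AE \<omega> in M. W 0 \<omega> = 0) \<and>
     (AE \<omega> in M. continuous_on {0..} (\<lambda>t. W t \<omega>)) \<and>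
     (\<forall>s t. 0 \<le> s \<and> s < t \<longrightarrow>
        distributed M lborel (\<lambda>\<omega>. W t \<omega> - W s \<omega>)
          (\<lambda>x. ennreal (normal_density 0 (sqrt (t - s)) x))) \<and>
     (\<forall>(ts::nat \<Rightarrow> real) m. 0 \<le> ts 0 \<and> (\<forall>i<m. ts i < ts (Suc i)) \<longrightarrow>
        prob_space.indep_vars M (\<lambda>_. borel)
          (\<lambda>i \<omega>. W (ts (Suc i)) \<omega> - W (ts i) \<omega>) {..<m})"

definition S1 :: "real \<Rightarrow> (real^'d \<Rightarrow> real^'d \<Rightarrow> real) \<Rightarrow> real^'d \<Rightarrow> real^'d \<Rightarrow> real" where
  "S1 \<tau> f x v = f (x - \<tau> *\<^sub>R v) v"

definition S2 :: "real \<Rightarrow> (real^'d \<Rightarrow> real^'d) \<Rightarrow> (real^'d \<Rightarrow> real^'d \<Rightarrow> real)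
     \<Rightarrow> real^'d \<Rightarrow> real^'d \<Rightarrow> real" where
  "S2 \<tau> E f x v = f x (v - \<tau> *\<^sub>R E x)"

primrec fmS :: "(real^'d \<Rightarrow> real^'d) \<Rightarrow> (nat \<Rightarrow> real^'d \<Rightarrow> real^'d \<Rightarrow> real) \<Rightarrow> nat
     \<Rightarrow> (nat \<Rightarrow> real \<Rightarrow> 'w \<Rightarrow> real) \<Rightarrow> real \<Rightarrow> (real^'d \<Rightarrow> real^'d \<Rightarrow> real)
     \<Rightarrow> nat \<Rightarrow> 'w \<Rightarrow> real^'d \<Rightarrow> real^'d \<Rightarrow> real" where
  "fmS E \<sigma> K \<beta> \<tau> f0 0 \<omega> = f0"
| "fmS E \<sigma> K \<beta> \<tau> f0 (Suc n) \<omega> =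
     (\<lambda>x v. exp (\<Sum>k=1..K. \<sigma> k x v * (\<beta> k (real (Suc n) * \<tau>) \<omega> - \<beta> k (real n * \<tau>) \<omega>))
            * S2 \<tau> E (S1 \<tau> (fmS E \<sigma> K \<beta> \<tau> f0 n \<omega>)) x v)"

end

theory Submission
  imports Defs
begin

definition Qh :: "(real^'d) set" where "Qh = {x. \<forall>i. 0 \<le> x$i \<and> x$i < 1}"
definition Zd :: "(real^'d) set" where "Zd = {z. int_vec z}"

lemma Qh_borel[measurable]: "Qh \<in> sets borel"
  unfolding Qh_def by measurable

lemma countable_Zd: "countable (Zd :: (real^'d) set)"
proof -
  have "Zd \<subseteq> (\<lambda>f. \<chi> i. real_of_int (f i)) ` (UNIV :: ('d \<Rightarrow> int) set)"
  proof
    fix x :: "real^'d" assume "x \<in> Zd"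
    then have "\<forall>i. x $ i = of_int (floor (x $ i))" unfolding Zd_def int_vec_def
      by (auto elim!: Ints_cases)
    then have "x = (\<chi> i. real_of_int (floor (x $ i)))" by (simp add: vec_eq_iff)
    then show "x \<in> range (\<lambda>f. \<chi> i. real_of_int (f i))" by (intro image_eqI[where x="\<lambda>i. floor (x $ i)"]) auto
  qed
  then show ?thesis by (rule countable_subset) simp
qed

lemma Zd_uminus: "z \<in> Zd \<Longrightarrow> - z \<in> Zd"
  unfolding Zd_def int_vec_def by simp

lemma Zd_chi: "(\<chi> i. real_of_int (f i)) \<in> Zd"
  unfolding Zd_def int_vec_def by simp

lemma plus_Qh_iff:
  assumes "z \<in> Zd"
  shows "y + z \<in> Qh \<longleftrightarrow> z = (\<chi> i. - real_of_int (floor (y $ i)))"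
proof -
  have "y + z \<in> Qh \<longleftrightarrow> (\<forall>i. z $ i = - real_of_int (floor (y $ i)))"
  proof -
    have "(0 \<le> y $ i + z $ i \<and> y $ i + z $ i < 1) \<longleftrightarrow> z $ i = - real_of_int (floor (y $ i))" for i
    proof -
      from assms obtain m where m: "z $ i = of_int m" unfolding Zd_def int_vec_def by (auto elim!: Ints_cases)
      have "(0 \<le> y $ i + of_int m \<and> y $ i + of_int m < 1) \<longleftrightarrow> floor (y $ i) = - m"
        unfolding floor_eq_iff by auto
      also have "\<dots> \<longleftrightarrow> m = - floor (y $ i)" by auto
      finally show ?thesis using m by (metis of_int_eq_iff of_int_minus)
    qed
    then show ?thesis unfolding Qh_def by auto
  qed
  then show ?thesis by (simp add: vec_eq_iff)
qed

lemma sum_ind_plus: fixes y :: "real^'d" shows "(\<integral>\<^sup>+z. indicator Qh (y + z) \<partial>count_space Zd) = (1::ennreal)"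
proof -
  let ?z0 = "(\<chi> i. - real_of_int (floor (y $ i))) :: real^'d"
  have z0: "?z0 \<in> Zd" using Zd_chi[of "\<lambda>i. - floor (y $ i)"] by simp
  have "(\<integral>\<^sup>+z. indicator Qh (y + z) \<partial>count_space Zd) = (\<integral>\<^sup>+z. indicator {?z0} z \<partial>count_space Zd)"
    by (intro nn_integral_cong) (simp add: indicator_def plus_Qh_iff)
  also have "\<dots> = 1" using z0 by (simp add: emeasure_count_space_finite)
  finally show ?thesis .
qed

lemma sum_ind_minus: fixes y :: "real^'d" shows "(\<integral>\<^sup>+z. indicator Qh (y - z) \<partial>count_space Zd) = (1::ennreal)"
proof -
  let ?z0 = "(\<chi> i. real_of_int (floor (y $ i))) :: real^'d"
  have z0: "?z0 \<in> Zd" using Zd_chi[of "\<lambda>i. floor (y $ i)"] by simp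
  have "y - z \<in> Qh \<longleftrightarrow> z = ?z0" if "z \<in> Zd" for z
    using plus_Qh_iff[OF Zd_uminus[OF that], of y] by (auto simp: vec_eq_iff)
  then have "(\<integral>\<^sup>+z. indicator Qh (y - z) \<partial>count_space Zd) = (\<integral>\<^sup>+z. indicator {?z0} z \<partial>count_space Zd)"
    by (intro nn_integral_cong) (simp add: indicator_def)
  also have "\<dots> = 1" using z0 by (simp add: emeasure_count_space_finite)
  finally show ?thesis .
qed

lemma lborel_shift:
  fixes F :: "'a::euclidean_space \<Rightarrow> ennreal" and a :: 'a
  assumes [measurable]: "F \<in> borel_measurable borel"
  shows "(\<integral>\<^sup>+x. F (a + x) \<partial>lborel) = (\<integral>\<^sup>+x. F x \<partial>lborel)"
proof -
  have "(\<integral>\<^sup>+x. F x \<partial>lborel) = (\<integral>\<^sup>+x. F x \<partial>distr lborel borel ((+) a))"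
    by (simp add: lborel_distr_plus)
  also have "\<dots> = (\<integral>\<^sup>+x. F (a + x) \<partial>lborel)"
    by (subst nn_integral_distr) auto
  finally show ?thesis ..
qed

lemma periodic_shift_Qh:
  fixes h :: "real^'d \<Rightarrow> ennreal" and c :: "real^'d"
  assumes [measurable]: "h \<in> borel_measurable borel"
    and per: "\<And>x z. z \<in> Zd \<Longrightarrow> h (x + z) = h x"
  shows "(\<integral>\<^sup>+x. h (x + c) * indicator Qh x \<partial>lborel) = (\<integral>\<^sup>+x. h x * indicator Qh x \<partial>lborel)"
proof -
  have inner: "(\<integral>\<^sup>+y. h y * indicator Qh (y - c) * indicator Qh (y + z) \<partial>lborel)
        = (\<integral>\<^sup>+w. h w * indicator Qh w * indicator Qh ((w - c) - z) \<partial>lborel)" if z: "z \<in> Zd" for z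
  proof -
    have "(\<integral>\<^sup>+y. h y * indicator Qh (y - c) * indicator Qh (y + z) \<partial>lborel)
        = (\<integral>\<^sup>+w. h (- z + w) * indicator Qh (- z + w - c) * indicator Qh (- z + w + z) \<partial>lborel)"
      by (rule lborel_shift[symmetric]) simp
    also have "\<dots> = (\<integral>\<^sup>+w. h w * indicator Qh w * indicator Qh ((w - c) - z) \<partial>lborel)"
    proof (intro nn_integral_cong)
      fix w :: "real^'d"
      have "h (- z + w) = h w" using per[OF Zd_uminus[OF z], of w] by (simp add: add.commute)
      moreover have "- z + w - c = (w - c) - z" "- z + w + z = w" by (simp_all add: algebra_simps)
      ultimately show "h (- z + w) * indicator Qh (- z + w - c) * indicator Qh (- z + w + z)
          = h w * indicator Qh w * indicator Qh ((w - c) - z)" by (simp only: mult_ac)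
    qed
    finally show ?thesis .
  qed
  have "(\<integral>\<^sup>+x. h (x + c) * indicator Qh x \<partial>lborel) = (\<integral>\<^sup>+y. h y * indicator Qh (y - c) \<partial>lborel)"
    using lborel_shift[of "\<lambda>y. h y * indicator Qh (y - c)" c] by (simp add: add.commute)
  also have "\<dots> = (\<integral>\<^sup>+y. h y * indicator Qh (y - c) * (\<integral>\<^sup>+z. indicator Qh (y + z) \<partial>count_space (Zd::(real^'d) set)) \<partial>lborel)"
    by (simp add: sum_ind_plus)
  also have "\<dots> = (\<integral>\<^sup>+y. \<integral>\<^sup>+z. h y * indicator Qh (y - c) * indicator Qh (y + z) \<partial>count_space (Zd::(real^'d) set) \<partial>lborel)"
    by (simp add: nn_integral_cmult)
  also have "\<dots> = (\<integral>\<^sup>+z. \<integral>\<^sup>+y. h y * indicator Qh (y - c) * indicator Qh (y + z) \<partial>lborel \<partial>count_space (Zd::(real^'d) set))"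
    by (rule nn_integral_count_space_nn_integral[OF countable_Zd]) simp
  also have "\<dots> = (\<integral>\<^sup>+z. \<integral>\<^sup>+w. h w * indicator Qh w * indicator Qh ((w - c) - z) \<partial>lborel \<partial>count_space (Zd::(real^'d) set))"
    by (rule nn_integral_cong, rule inner, simp)
  also have "\<dots> = (\<integral>\<^sup>+w. \<integral>\<^sup>+z. h w * indicator Qh w * indicator Qh ((w - c) - z) \<partial>count_space (Zd::(real^'d) set) \<partial>lborel)"
    by (rule nn_integral_count_space_nn_integral[OF countable_Zd, symmetric]) simp
  also have "\<dots> = (\<integral>\<^sup>+w. h w * indicator Qh w * (\<integral>\<^sup>+z. indicator Qh ((w - c) - z) \<partial>count_space (Zd::(real^'d) set)) \<partial>lborel)"
    by (simp add: nn_integral_cmult)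
  also have "\<dots> = (\<integral>\<^sup>+w. h w * indicator Qh w \<partial>lborel)"
    by (simp add: sum_ind_minus)
  finally show ?thesis .
qed

lemma one_nth[simp]: "(One::real^'d) $ i = 1"
  by (metis Cart_1 one_index)

lemma cbox_Qh_AE:
  "AE x in lborel. indicator (cbox 0 (One::real^'d)) x = (indicator Qh x :: ennreal)"
proof (rule AE_I')
  have "emeasure lborel (cbox 0 (One::real^'d) - box 0 One) = emeasure lborel (cbox 0 (One::real^'d)) - emeasure lborel (box 0 (One::real^'d))"
    by (intro emeasure_Diff) (auto simp: emeasure_lborel_cbox_eq box_subset_cbox)
  also have "\<dots> = 0" by (simp add: emeasure_lborel_cbox_eq emeasure_lborel_box_eq)
  finally show "cbox 0 (One::real^'d) - box 0 One \<in> null_sets lborel"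
    by (auto simp: null_sets_def)
  have b1: "x \<in> box 0 One \<longleftrightarrow> (\<forall>i. 0 < x$i \<and> x$i < 1)" for x :: "real^'d"
    using mem_box_cart(1)[of x 0 One] by (simp only: one_nth zero_index)
  have b2: "x \<in> cbox 0 One \<longleftrightarrow> (\<forall>i. 0 \<le> x$i \<and> x$i \<le> 1)" for x :: "real^'d"
    using mem_box_cart(2)[of x 0 One] by (simp only: one_nth zero_index)
  have "box 0 One \<subseteq> (Qh :: (real^'d) set)"
  proof
    fix x :: "real^'d" assume "x \<in> box 0 One"
    then have "\<forall>i. 0 < x$i \<and> x$i < 1" using b1 by blast
    then show "x \<in> Qh" by (auto simp: Qh_def less_imp_le)
  qed
  moreover have "Qh \<subseteq> cbox 0 (One::real^'d)"
  proof
    fix x :: "real^'d" assume "x \<in> Qh"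
    then have "\<forall>i. 0 \<le> x$i \<and> x$i \<le> 1" by (auto simp: Qh_def less_imp_le)
    then show "x \<in> cbox 0 One" using b2 by blast
  qed
  ultimately
  show "{x \<in> space lborel. indicator (cbox 0 (One::real^'d)) x \<noteq> (indicator Qh x :: ennreal)} \<subseteq> cbox 0 One - box 0 One"
    by (auto simp: indicator_def split: if_splits)
qed

lemma mu_xv_nn:
  fixes H :: "(real^'d) \<times> (real^'d) \<Rightarrow> ennreal"
  assumes [measurable]: "H \<in> borel_measurable borel"
  shows "(\<integral>\<^sup>+p. H p \<partial>mu_xv) = (\<integral>\<^sup>+v. \<integral>\<^sup>+x. H (x, v) * indicator Qh x \<partial>lborel \<partial>lborel)"
    and "(\<integral>\<^sup>+p. H p \<partial>mu_xv) = (\<integral>\<^sup>+x. indicator Qh x * (\<integral>\<^sup>+v. H (x, v) \<partial>lborel) \<partial>lborel)"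
proof -
  have [measurable]: "cbox 0 One \<times> UNIV \<in> sets (borel :: ((real^'d) \<times> (real^'d)) measure)"
    by (intro borel_closed closed_Times) auto
  have sets: "cbox 0 One \<times> UNIV \<inter> space (lborel \<Otimes>\<^sub>M lborel) \<in> sets (lborel \<Otimes>\<^sub>M (lborel :: (real^'d) measure))"
    by (simp add: lborel_prod)
  have m: "(\<lambda>p. H p * indicator (cbox 0 One \<times> UNIV) p) \<in> borel_measurable (lborel \<Otimes>\<^sub>M (lborel :: (real^'d) measure))"
    by (simp add: lborel_prod)
  have eq: "(\<integral>\<^sup>+p. H p \<partial>mu_xv) = (\<integral>\<^sup>+p. H p * indicator (cbox 0 One \<times> UNIV) p \<partial>(lborel \<Otimes>\<^sub>M lborel))"
    unfolding mu_xv_def by (rule nn_integral_restrict_space[OF sets])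
  have "(\<integral>\<^sup>+p. H p \<partial>mu_xv) = (\<integral>\<^sup>+v. \<integral>\<^sup>+x. H (x, v) * indicator (cbox 0 One) x \<partial>lborel \<partial>lborel)"
    unfolding eq lborel_pair.nn_integral_snd[OF m, symmetric] by (simp add: indicator_times)
  also have "\<dots> = (\<integral>\<^sup>+v. \<integral>\<^sup>+x. H (x, v) * indicator Qh x \<partial>lborel \<partial>lborel)"
    by (rule nn_integral_cong, rule nn_integral_cong_AE, use cbox_Qh_AE in \<open>auto elim!: eventually_mono\<close>)
  finally show "(\<integral>\<^sup>+p. H p \<partial>mu_xv) = (\<integral>\<^sup>+v. \<integral>\<^sup>+x. H (x, v) * indicator Qh x \<partial>lborel \<partial>lborel)" .
  have "(\<integral>\<^sup>+p. H p \<partial>mu_xv) = (\<integral>\<^sup>+x. \<integral>\<^sup>+v. H (x, v) * indicator (cbox 0 One) x \<partial>lborel \<partial>lborel)"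
    unfolding eq lborel.nn_integral_fst[OF m, symmetric] by (simp add: indicator_times)
  also have "\<dots> = (\<integral>\<^sup>+x. indicator (cbox 0 One) x * (\<integral>\<^sup>+v. H (x, v) \<partial>lborel) \<partial>lborel)"
    by (simp add: nn_integral_multc mult.commute)
  also have "\<dots> = (\<integral>\<^sup>+x. indicator Qh x * (\<integral>\<^sup>+v. H (x, v) \<partial>lborel) \<partial>lborel)"
    by (rule nn_integral_cong_AE, use cbox_Qh_AE in \<open>auto elim!: eventually_mono\<close>)
  finally show "(\<integral>\<^sup>+p. H p \<partial>mu_xv) = (\<integral>\<^sup>+x. indicator Qh x * (\<integral>\<^sup>+v. H (x, v) \<partial>lborel) \<partial>lborel)" .
qed

lemma borel_fst[measurable]: "fst \<in> borel_measurable (borel :: ('a::second_countable_topology \<times> 'b::second_countable_topology) measure)"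
  by (rule borel_measurable_continuous_onI) (intro continuous_intros)

lemma borel_snd[measurable]: "snd \<in> borel_measurable (borel :: ('a::second_countable_topology \<times> 'b::second_countable_topology) measure)"
  by (rule borel_measurable_continuous_onI) (intro continuous_intros)

lemma pres_S1:
  fixes H :: "(real^'d) \<times> (real^'d) \<Rightarrow> ennreal"
  assumes [measurable]: "H \<in> borel_measurable borel"
    and per: "\<And>x v z. z \<in> Zd \<Longrightarrow> H (x + z, v) = H (x, v)"
  shows "(\<integral>\<^sup>+p. H (fst p - t *\<^sub>R snd p, snd p) \<partial>mu_xv) = (\<integral>\<^sup>+p. H p \<partial>mu_xv)"
proof -
  have "(\<integral>\<^sup>+p. H (fst p - t *\<^sub>R snd p, snd p) \<partial>mu_xv)
      = (\<integral>\<^sup>+v. \<integral>\<^sup>+x. H (x + (- (t *\<^sub>R v)), v) * indicator Qh x \<partial>lborel \<partial>lborel)"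
    by (subst mu_xv_nn(1)) simp_all
  also have "\<dots> = (\<integral>\<^sup>+v. \<integral>\<^sup>+x. H (x, v) * indicator Qh x \<partial>lborel \<partial>lborel)"
    by (intro nn_integral_cong periodic_shift_Qh[where h="\<lambda>x. H (x, _)"]) (simp_all add: per)
  also have "\<dots> = (\<integral>\<^sup>+p. H p \<partial>mu_xv)"
    by (subst mu_xv_nn(1)) simp_all
  finally show ?thesis .
qed

lemma pres_S2:
  fixes H :: "(real^'d) \<times> (real^'d) \<Rightarrow> ennreal" and E :: "real^'d \<Rightarrow> real^'d"
  assumes [measurable]: "H \<in> borel_measurable borel" "E \<in> borel_measurable borel"
  shows "(\<integral>\<^sup>+p. H (fst p, snd p - t *\<^sub>R E (fst p)) \<partial>mu_xv) = (\<integral>\<^sup>+p. H p \<partial>mu_xv)"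
proof -
  have "(\<integral>\<^sup>+p. H (fst p, snd p - t *\<^sub>R E (fst p)) \<partial>mu_xv)
      = (\<integral>\<^sup>+x. indicator Qh x * (\<integral>\<^sup>+v. H (x, (- (t *\<^sub>R E x)) + v) \<partial>lborel) \<partial>lborel)"
    by (subst mu_xv_nn(2)) simp_all
  also have "\<dots> = (\<integral>\<^sup>+x. indicator Qh x * (\<integral>\<^sup>+v. H (x, v) \<partial>lborel) \<partial>lborel)"
    by (intro nn_integral_cong arg_cong2[where f="(*)"] refl lborel_shift[where F="\<lambda>v. H (_, v)"]) simp
  also have "\<dots> = (\<integral>\<^sup>+p. H p \<partial>mu_xv)"
    by (subst mu_xv_nn(2)) simp_all
  finally show ?thesis .
qed

lemma normal_mgf:
  fixes s c :: real
  assumes s: "0 < s"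
  shows "(\<integral>\<^sup>+t. ennreal (exp (c * t)) \<partial>density lborel (\<lambda>x. ennreal (normal_density 0 s x)))
       = ennreal (exp (c\<^sup>2 * s\<^sup>2 / 2))"
proof -
  have id: "normal_density 0 s t * exp (c * t) = exp (c\<^sup>2 * s\<^sup>2 / 2) * normal_density (c * s\<^sup>2) s t" for t
  proof -
    have "- (t - 0)\<^sup>2 / (2 * s\<^sup>2) + c * t = c\<^sup>2 * s\<^sup>2 / 2 + (- (t - c * s\<^sup>2)\<^sup>2 / (2 * s\<^sup>2))"
      using s by (simp add: field_simps power2_eq_square)
    then have "exp (- (t - 0)\<^sup>2 / (2 * s\<^sup>2)) * exp (c * t) = exp (c\<^sup>2 * s\<^sup>2 / 2) * exp (- (t - c * s\<^sup>2)\<^sup>2 / (2 * s\<^sup>2))"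
      by (simp add: exp_add[symmetric])
    then show ?thesis unfolding normal_density_def by (simp add: mult_ac)
  qed
  have "(\<integral>\<^sup>+t. ennreal (exp (c * t)) \<partial>density lborel (\<lambda>x. ennreal (normal_density 0 s x)))
      = (\<integral>\<^sup>+t. ennreal (normal_density 0 s t) * ennreal (exp (c * t)) \<partial>lborel)"
    by (rule nn_integral_density) simp_all
  also have "\<dots> = (\<integral>\<^sup>+t. ennreal (exp (c\<^sup>2 * s\<^sup>2 / 2)) * ennreal (normal_density (c * s\<^sup>2) s t) \<partial>lborel)"
    by (intro nn_integral_cong) (simp add: ennreal_mult'[symmetric] id)
  also have "\<dots> = ennreal (exp (c\<^sup>2 * s\<^sup>2 / 2)) * (\<integral>\<^sup>+t. ennreal (normal_density (c * s\<^sup>2) s t) \<partial>lborel)"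
    by (simp add: nn_integral_cmult)
  also have "(\<integral>\<^sup>+t. ennreal (normal_density (c * s\<^sup>2) s t) \<partial>lborel) = 1"
    using s by (subst nn_integral_eq_integral) (simp_all add: integral_normal_density)
  finally show ?thesis by simp
qed

definition nu :: "real \<Rightarrow> real measure" where
  "nu t = density lborel (\<lambda>x. ennreal (normal_density 0 (sqrt t) x))"

lemma sets_nu[simp, measurable_cong]: "sets (nu t) = sets borel"
  by (simp add: nu_def)

lemma prob_space_nu: "0 < t \<Longrightarrow> prob_space (nu t)"
  unfolding nu_def by (rule prob_space_normal_density) simp

lemma psf_nu: "0 < t \<Longrightarrow> product_sigma_finite (\<lambda>_. nu t)"
  unfolding product_sigma_finite_def
  using prob_space_nu prob_space_imp_sigma_finite by blast

lemma increments_distr: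
  fixes M :: "'w measure" and \<beta> :: "nat \<Rightarrow> real \<Rightarrow> 'w \<Rightarrow> real"
  assumes P: "prob_space M"
    and W: "\<forall>k\<in>{1..K}. std_wiener M (\<beta> k)"
    and ind: "prob_space.indep_vars M (\<lambda>_. Pi\<^sub>M UNIV (\<lambda>_. borel)) (\<lambda>k \<omega> t. \<beta> k t \<omega>) {1..K}"
    and tau: "0 < \<tau>"
  shows "distr M (Pi\<^sub>M ({..<n} \<times> {1..K}) (\<lambda>_. nu \<tau>))
           (\<lambda>\<omega>. \<lambda>i\<in>{..<n} \<times> {1..K}. \<beta> (snd i) (real (Suc (fst i)) * \<tau>) \<omega> - \<beta> (snd i) (real (fst i) * \<tau>) \<omega>)
         = Pi\<^sub>M ({..<n} \<times> {1..K}) (\<lambda>_. nu \<tau>)"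
proof -
  interpret prob_space M by (rule P)
  interpret product_sigma_finite "\<lambda>_. nu \<tau>" by (rule psf_nu[OF tau])
  define N where "N = {..<n} \<times> {1..K}"
  define D where "D j k \<omega> = \<beta> k (real (Suc j) * \<tau>) \<omega> - \<beta> k (real j * \<tau>) \<omega>" for j k \<omega>
  have bm: "\<beta> k t \<in> borel_measurable M" if "k \<in> {1..K}" for k t
    using W that unfolding std_wiener_def by blast
  have Dm[measurable]: "D j k \<in> borel_measurable M" if "k \<in> {1..K}" for j k
    unfolding D_def using bm[OF that] by measurable
  have Zm: "(\<lambda>\<omega>. \<lambda>i\<in>N. D (fst i) (snd i) \<omega>) \<in> measurable M (Pi\<^sub>M N (\<lambda>_. nu \<tau>))"
    by (rule measurable_restrict) (auto simp: N_def measurable_cong_sets[OF refl sets_nu] intro: Dm)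
  have distD: "measure (nu \<tau>) A = prob (D j k -` A \<inter> space M)" if "k \<in> {1..K}" "A \<in> sets borel" for j k A
  proof -
    have eq: "real (Suc j) * \<tau> - real j * \<tau> = \<tau>" by (simp add: algebra_simps)
    have "std_wiener M (\<beta> k)" using W that(1) by blast
    then have sw: "\<forall>s t. 0 \<le> s \<and> s < t \<longrightarrow> distributed M lborel (\<lambda>\<omega>. \<beta> k t \<omega> - \<beta> k s \<omega>)
          (\<lambda>x. ennreal (normal_density 0 (sqrt (t - s)) x))"
      unfolding std_wiener_def by blast
    have "distributed M lborel (\<lambda>\<omega>. \<beta> k (real (Suc j) * \<tau>) \<omega> - \<beta> k (real j * \<tau>) \<omega>)
          (\<lambda>x. ennreal (normal_density 0 (sqrt (real (Suc j) * \<tau> - real j * \<tau>)) x))"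
      by (rule sw[rule_format]) (use tau in \<open>auto intro: mult_strict_right_mono\<close>)
    then have "distributed M lborel (D j k) (\<lambda>x. ennreal (normal_density 0 (sqrt \<tau>) x))"
      unfolding eq D_def .
    then have "distr M lborel (D j k) = nu \<tau>" and Dm': "D j k \<in> measurable M lborel"
      unfolding distributed_def nu_def by auto
    then show ?thesis using measure_distr[OF Dm', of A] that by simp
  qed
  have incr: "prob (\<Inter>j\<in>{..<n}. D j k -` A j \<inter> space M) = (\<Prod>j\<in>{..<n}. prob (D j k -` A j \<inter> space M))"
    if "k \<in> {1..K}" "n \<noteq> 0" "\<And>j. j < n \<Longrightarrow> A j \<in> sets borel" for k A
  proof -
    have "std_wiener M (\<beta> k)" using W that(1) by blast
    then have sw: "\<forall>(ts::nat \<Rightarrow> real) m. 0 \<le> ts 0 \<and> (\<forall>i<m. ts i < ts (Suc i)) \<longrightarrow>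
        indep_vars (\<lambda>_. borel) (\<lambda>i \<omega>. \<beta> k (ts (Suc i)) \<omega> - \<beta> k (ts i) \<omega>) {..<m}"
      unfolding std_wiener_def by blast
    have "indep_vars (\<lambda>_. borel) (\<lambda>i \<omega>. \<beta> k ((\<lambda>i. real i * \<tau>) (Suc i)) \<omega> - \<beta> k ((\<lambda>i. real i * \<tau>) i) \<omega>) {..<n}"
      by (rule sw[rule_format]) (use tau in \<open>auto intro: mult_strict_right_mono\<close>)
    then have "indep_vars (\<lambda>_. borel) (\<lambda>j. D j k) {..<n}" unfolding D_def by simp
    from indep_varsD_finite[OF this, of A] that show ?thesis by auto
  qed
  show ?thesis
    unfolding N_def[symmetric] D_def[symmetric]
  proof (rule PiM_eqI)
    show "finite N" by (simp add: N_def)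
    show "sets (distr M (Pi\<^sub>M N (\<lambda>_. nu \<tau>)) (\<lambda>\<omega>. \<lambda>i\<in>N. D (fst i) (snd i) \<omega>)) = sets (Pi\<^sub>M N (\<lambda>_. nu \<tau>))"
      by simp
    fix A assume A: "\<And>i. i \<in> N \<Longrightarrow> A i \<in> sets (nu \<tau>)"
    have PiA: "Pi\<^sub>E N A \<in> sets (Pi\<^sub>M N (\<lambda>_. nu \<tau>))"
      using A by (intro sets_PiM_I_finite) (auto simp: N_def)
    have pre: "(\<lambda>\<omega>. \<lambda>i\<in>N. D (fst i) (snd i) \<omega>) -` Pi\<^sub>E N A \<inter> space M = {\<omega>\<in>space M. \<forall>i\<in>N. D (fst i) (snd i) \<omega> \<in> A i}"
      by (auto simp: Pi_iff) (metis fst_conv snd_conv)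
    show "emeasure (distr M (Pi\<^sub>M N (\<lambda>_. nu \<tau>)) (\<lambda>\<omega>. \<lambda>i\<in>N. D (fst i) (snd i) \<omega>)) (Pi\<^sub>E N A)
        = (\<Prod>i\<in>N. emeasure (nu \<tau>) (A i))"
    proof (cases "n = 0 \<or> K = 0")
      case True
      then have "N = {}" by (auto simp: N_def)
      have "emeasure (distr M (Pi\<^sub>M N (\<lambda>_. nu \<tau>)) (\<lambda>\<omega>. \<lambda>i\<in>N. D (fst i) (snd i) \<omega>)) (Pi\<^sub>E N A) = 1"
        by (subst emeasure_distr[OF Zm PiA], unfold pre) (simp add: emeasure_space_1 \<open>N = {}\<close>)
      then show ?thesis by (simp add: \<open>N = {}\<close>)
    next
      case False
      then have n0: "n \<noteq> 0" and K0: "{1..K} \<noteq> {}" by auto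
      define B where "B k = {y \<in> space (Pi\<^sub>M UNIV (\<lambda>_::real. borel::real measure)). \<forall>j<n. y (real (Suc j) * \<tau>) - y (real j * \<tau>) \<in> A (j, k)}" for k
      have Bs: "B k \<in> sets (Pi\<^sub>M UNIV (\<lambda>_::real. borel::real measure))" if "k \<in> {1..K}" for k
      proof -
        have [measurable]: "A (j, k) \<in> sets borel" if "j < n" for j
          using A[of "(j, k)"] that \<open>k \<in> {1..K}\<close> by (auto simp: N_def)
        show ?thesis unfolding B_def by measurable
      qed
      have ev: "{\<omega>\<in>space M. \<forall>i\<in>N. D (fst i) (snd i) \<omega> \<in> A i} = (\<Inter>k\<in>{1..K}. (\<lambda>\<omega> t. \<beta> k t \<omega>) -` B k \<inter> space M)"
        using K0 by (auto simp: N_def B_def D_def space_PiM)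
      have evk: "(\<lambda>\<omega> t. \<beta> k t \<omega>) -` B k \<inter> space M = (\<Inter>j\<in>{..<n}. D j k -` A (j, k) \<inter> space M)" for k
        using n0 by (auto simp: B_def D_def space_PiM)
      have "prob {\<omega>\<in>space M. \<forall>i\<in>N. D (fst i) (snd i) \<omega> \<in> A i}
          = (\<Prod>k\<in>{1..K}. prob ((\<lambda>\<omega> t. \<beta> k t \<omega>) -` B k \<inter> space M))"
        unfolding ev by (rule indep_varsD_finite[OF ind K0]) (auto intro: Bs)
      also have "\<dots> = (\<Prod>k\<in>{1..K}. \<Prod>j\<in>{..<n}. prob (D j k -` A (j, k) \<inter> space M))"
        unfolding evk
        by (intro prod.cong refl incr n0) (use A in \<open>auto simp: N_def\<close>)
      also have "\<dots> = (\<Prod>k\<in>{1..K}. \<Prod>j\<in>{..<n}. measure (nu \<tau>) (A (j, k)))"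
        by (intro prod.cong refl distD[symmetric]) (use A in \<open>auto simp: N_def\<close>)
      also have "\<dots> = (\<Prod>i\<in>N. measure (nu \<tau>) (A i))"
        unfolding N_def by (subst prod.swap) (simp add: prod.cartesian_product)
      finally have "prob {\<omega>\<in>space M. \<forall>i\<in>N. D (fst i) (snd i) \<omega> \<in> A i} = (\<Prod>i\<in>N. measure (nu \<tau>) (A i))" .
      moreover have "emeasure (nu \<tau>) (A i) = ennreal (measure (nu \<tau>) (A i))" for i
        using prob_space.finite_measure[OF prob_space_nu[OF tau]] by (simp add: finite_measure.emeasure_eq_measure)
      ultimately show ?thesis
        by (simp add: emeasure_distr[OF Zm PiA] pre emeasure_eq_measure prod_ennreal)
    qed
  qed
qed

primrec Gs :: "(real^'d \<Rightarrow> real^'d) \<Rightarrow> (nat \<Rightarrow> real^'d \<Rightarrow> real^'d \<Rightarrow> real) \<Rightarrow> nat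
     \<Rightarrow> real \<Rightarrow> (real^'d \<Rightarrow> real^'d \<Rightarrow> real) \<Rightarrow> nat \<Rightarrow> (nat \<times> nat \<Rightarrow> real) \<Rightarrow> real^'d \<Rightarrow> real^'d \<Rightarrow> real" where
  "Gs E \<sigma> K \<tau> f0 0 z = f0"
| "Gs E \<sigma> K \<tau> f0 (Suc n) z =
     (\<lambda>x v. exp (\<Sum>k=1..K. \<sigma> k x v * z (n, k)) * S2 \<tau> E (S1 \<tau> (Gs E \<sigma> K \<tau> f0 n z)) x v)"

lemma fmS_Gs:
  "fmS E \<sigma> K \<beta> \<tau> f0 n \<omega> =
   Gs E \<sigma> K \<tau> f0 n (\<lambda>i. \<beta> (snd i) (real (Suc (fst i)) * \<tau>) \<omega> - \<beta> (snd i) (real (fst i) * \<tau>) \<omega>)"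
  by (induction n) simp_all

lemma Gs_cong:
  "(\<And>j k. j < n \<Longrightarrow> k \<in> {1..K} \<Longrightarrow> z (j, k) = z' (j, k)) \<Longrightarrow> Gs E \<sigma> K \<tau> f0 n z = Gs E \<sigma> K \<tau> f0 n z'"
proof (induction n)
  case 0 then show ?case by simp
next
  case (Suc n)
  have "Gs E \<sigma> K \<tau> f0 n z = Gs E \<sigma> K \<tau> f0 n z'" using Suc by simp
  moreover have "(\<Sum>k=1..K. \<sigma> k x v * z (n, k)) = (\<Sum>k=1..K. \<sigma> k x v * z' (n, k))" for x v
    using Suc.prems by (intro sum.cong) auto
  ultimately show ?case by simp
qed

lemma Gs_periodic:
  assumes "\<forall>k\<in>{1..K}. periodic_x (\<sigma> k)" "periodic_fun E" "periodic_x f0"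
  shows "periodic_x (Gs E \<sigma> K \<tau> f0 n z)"
proof (induction n)
  case 0 then show ?case using assms by simp
next
  case (Suc n)
  have s: "\<sigma> k (x + y) v = \<sigma> k x v" if "k \<in> {1..K}" "int_vec y" for k x v y
    using assms(1) that unfolding periodic_x_def by blast
  have e: "E (x + y) = E x" if "int_vec y" for x y
    using assms(2) that unfolding periodic_fun_def by blast
  have g: "Gs E \<sigma> K \<tau> f0 n z (x + y) v = Gs E \<sigma> K \<tau> f0 n z x v" if "int_vec y" for x v y
    using Suc that unfolding periodic_x_def by blast
  have "Gs E \<sigma> K \<tau> f0 n z (x + y - \<tau> *\<^sub>R w) w = Gs E \<sigma> K \<tau> f0 n z (x - \<tau> *\<^sub>R w) w" if "int_vec y" for x w y
    using g[OF that, of "x - \<tau> *\<^sub>R w" w] by (simp add: algebra_simps)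
  then show ?case unfolding periodic_x_def
    by (auto simp: S1_def S2_def e s intro!: sum.cong)
qed

lemma S2S1_eq: "S2 \<tau> E (S1 \<tau> g) x v = g (x - \<tau> *\<^sub>R (v - \<tau> *\<^sub>R E x)) (v - \<tau> *\<^sub>R E x)"
  by (simp add: S1_def S2_def)

lemma Gs_measurable:
  fixes E :: "real^'d \<Rightarrow> real^'d" and f0 :: "real^'d \<Rightarrow> real^'d \<Rightarrow> real"
  assumes f0m: "case_prod f0 \<in> borel_measurable borel"
    and \<sigma>m: "\<And>k. k \<in> {1..K} \<Longrightarrow> case_prod (\<sigma> k) \<in> borel_measurable borel"
    and Em[measurable]: "E \<in> borel_measurable borel"
    and I: "{..<n} \<times> {1..K} \<subseteq> I"
  shows "(\<lambda>q. Gs E \<sigma> K \<tau> f0 n (fst q) (fst (snd q)) (snd (snd q)))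
           \<in> borel_measurable (Pi\<^sub>M I (\<lambda>_. nu t) \<Otimes>\<^sub>M (borel :: ((real^'d) \<times> (real^'d)) measure))"
  using I
proof (induction n)
  case 0
  show ?case using measurable_comp[OF measurable_snd f0m] by (simp add: comp_def split_beta')
next
  case (Suc n)
  let ?P = "Pi\<^sub>M I (\<lambda>_. nu t) \<Otimes>\<^sub>M (borel :: ((real^'d) \<times> (real^'d)) measure)"
  have IH: "(\<lambda>q. Gs E \<sigma> K \<tau> f0 n (fst q) (fst (snd q)) (snd (snd q))) \<in> borel_measurable ?P"
  proof (rule Suc.IH)
    show "{..<n} \<times> {1..K} \<subseteq> I" using Suc.prems by (auto simp del: atLeastAtMost_iff)
  qed
  define T where "T p = (fst p - \<tau> *\<^sub>R (snd p - \<tau> *\<^sub>R E (fst p)), snd p - \<tau> *\<^sub>R E (fst p))" for p :: "(real^'d) \<times> (real^'d)"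
  have Tm: "T \<in> borel_measurable borel" unfolding T_def by measurable
  have Pm: "(\<lambda>q. (fst q, T (snd q))) \<in> measurable ?P ?P"
    by (intro measurable_Pair measurable_fst measurable_comp[OF measurable_snd Tm, unfolded comp_def])
  have G: "(\<lambda>q. Gs E \<sigma> K \<tau> f0 n (fst q) (fst (T (snd q))) (snd (T (snd q)))) \<in> borel_measurable ?P"
    using measurable_comp[OF Pm IH] by (simp add: comp_def)
  have sk: "(\<lambda>q. \<sigma> k (fst (snd q)) (snd (snd q))) \<in> borel_measurable ?P" if "k \<in> {1..K}" for k
    using measurable_comp[OF measurable_snd \<sigma>m[OF that]] by (simp add: comp_def split_beta')
  have zk: "(\<lambda>q. fst q (n, k)) \<in> borel_measurable ?P" if "k \<in> {1..K}" for k
  proof -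
    have "(n, k) \<in> I" using Suc.prems that by auto
    then have "(\<lambda>z. z (n, k)) \<in> borel_measurable (Pi\<^sub>M I (\<lambda>_. nu t))"
      using measurable_component_singleton[of "(n, k)" I "\<lambda>_. nu t"] by (simp add: measurable_cong_sets[OF refl sets_nu])
    then show ?thesis using measurable_comp[OF measurable_fst] by (simp add: comp_def)
  qed
  have S: "(\<lambda>q. \<Sum>k=1..K. \<sigma> k (fst (snd q)) (snd (snd q)) * fst q (n, k)) \<in> borel_measurable ?P"
    by (intro borel_measurable_sum borel_measurable_times sk zk) auto
  show ?case
    unfolding Gs.simps S2S1_eq
    using borel_measurable_times[OF measurable_comp[OF S borel_measurable_exp, unfolded comp_def] G] by (simp add: T_def)
qed

definition L2N :: "(real^'d \<Rightarrow> real^'d \<Rightarrow> real) \<Rightarrow> ennreal" where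
  "L2N g = (\<integral>\<^sup>+p. ennreal ((case_prod g p)\<^sup>2) \<partial>mu_xv)"

lemma CU_borel[measurable]: "cbox 0 One \<times> UNIV \<in> sets (borel :: ((real^'d) \<times> (real^'d)) measure)"
  by (intro borel_closed closed_Times) auto

lemma mu_xv_lborel:
  fixes H :: "(real^'d) \<times> (real^'d) \<Rightarrow> ennreal"
  shows "(\<integral>\<^sup>+p. H p \<partial>mu_xv) = (\<integral>\<^sup>+p. H p * indicator (cbox 0 One \<times> UNIV) p \<partial>lborel)"
  unfolding mu_xv_def lborel_prod by (rule nn_integral_restrict_space) simp

lemma measurable_app2:
  fixes g :: "'a::second_countable_topology \<Rightarrow> 'b::second_countable_topology \<Rightarrow> 'c::topological_space"
  assumes "case_prod g \<in> borel_measurable borel" "a \<in> borel_measurable M" "b \<in> borel_measurable M"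
  shows "(\<lambda>x. g (a x) (b x)) \<in> borel_measurable M"
  using measurable_comp[OF borel_measurable_Pair[OF assms(2,3)] assms(1)] by (simp add: comp_def)

lemma L2N_S2S1:
  fixes g :: "real^'d \<Rightarrow> real^'d \<Rightarrow> real" and E :: "real^'d \<Rightarrow> real^'d"
  assumes gm[measurable]: "case_prod g \<in> borel_measurable borel"
    and Em[measurable]: "E \<in> borel_measurable borel"
    and per: "periodic_x g"
  shows "L2N (S2 \<tau> E (S1 \<tau> g)) = L2N g"
proof -
  have gm': "(\<lambda>p. g (fst p) (snd p)) \<in> borel_measurable borel" using gm by (simp add: split_beta')
  note [measurable] = gm'
  note [measurable (raw)] = measurable_app2[OF gm]
  have "L2N (S2 \<tau> E (S1 \<tau> g)) = (\<integral>\<^sup>+p. (\<lambda>(x,v). ennreal ((g (x - \<tau> *\<^sub>R v) v)\<^sup>2)) (fst p, snd p - \<tau> *\<^sub>R E (fst p)) \<partial>mu_xv)"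
    unfolding L2N_def by (simp add: S2S1_eq split_beta')
  also have "\<dots> = (\<integral>\<^sup>+p. (\<lambda>(x,v). ennreal ((g (x - \<tau> *\<^sub>R v) v)\<^sup>2)) p \<partial>mu_xv)"
    by (rule pres_S2) (simp_all add: split_beta')
  also have "\<dots> = (\<integral>\<^sup>+p. (\<lambda>(x,v). ennreal ((g x v)\<^sup>2)) (fst p - \<tau> *\<^sub>R snd p, snd p) \<partial>mu_xv)"
    by (simp add: split_beta')
  also have "\<dots> = (\<integral>\<^sup>+p. (\<lambda>(x,v). ennreal ((g x v)\<^sup>2)) p \<partial>mu_xv)"
    by (rule pres_S1) (use per in \<open>simp_all add: split_beta' periodic_x_def Zd_def\<close>)
  finally show ?thesis unfolding L2N_def by (simp add: split_beta')
qed

lemma prod_J: "(\<Prod>i\<in>{n} \<times> A. f i) = (\<Prod>k\<in>A. f (n, k))"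
proof -
  have "{n} \<times> A = Pair n ` A" by auto
  moreover have "inj_on (Pair n) A" by (auto simp: inj_on_def)
  ultimately show ?thesis by (simp add: prod.reindex comp_def)
qed

lemma comp_nu: "i \<in> J \<Longrightarrow> (\<lambda>x. x i) \<in> borel_measurable (Pi\<^sub>M J (\<lambda>_. nu t))"
  using measurable_component_singleton[of i J "\<lambda>_. nu t"] by (simp add: measurable_cong_sets[OF refl sets_nu])

lemma mgf_step:
  fixes W :: "real^'d \<Rightarrow> real^'d \<Rightarrow> real" and \<sigma> :: "nat \<Rightarrow> real^'d \<Rightarrow> real^'d \<Rightarrow> real"
    and n :: nat
  assumes Wm: "case_prod W \<in> borel_measurable borel"
    and \<sigma>m: "\<And>k. k \<in> {1..K} \<Longrightarrow> case_prod (\<sigma> k) \<in> borel_measurable borel"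
    and ssum: "\<And>x v. (\<Sum>k=1..K. (\<sigma> k x v)\<^sup>2) = s\<^sup>2"
    and tau: "0 < \<tau>"
  shows "(\<integral>\<^sup>+y. L2N (\<lambda>a b. exp (\<Sum>k=1..K. \<sigma> k a b * y (n, k)) * W a b) \<partial>Pi\<^sub>M ({n} \<times> {1..K}) (\<lambda>_. nu \<tau>))
       = ennreal (exp (2 * s\<^sup>2 * \<tau>)) * L2N W"
proof -
  define J where "J = {n} \<times> {1..K}"
  interpret product_sigma_finite "\<lambda>_. nu \<tau>" by (rule psf_nu[OF tau])
  interpret PJ: finite_product_sigma_finite "\<lambda>_. nu \<tau>" J by standard (simp add: J_def)
  interpret PL: pair_sigma_finite "Pi\<^sub>M J (\<lambda>_. nu \<tau>)" "lborel :: ((real^'d) \<times> (real^'d)) measure" ..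
  define CU where "CU = (cbox 0 One \<times> UNIV :: ((real^'d) \<times> (real^'d)) set)"
  define F where "F y p = (\<Prod>i\<in>J. ennreal (exp ((2 * \<sigma> (snd i) (fst p) (snd p)) * y i))) *
     (ennreal ((case_prod W p)\<^sup>2) * indicator CU p)" for y :: "nat \<times> nat \<Rightarrow> real" and p
  have pw: "ennreal ((case_prod (\<lambda>a b. exp (\<Sum>k=1..K. \<sigma> k a b * y (n, k)) * W a b) p)\<^sup>2) * indicator CU p = F y p" for y p
  proof -
    obtain a b where p: "p = (a, b)" by (cases p)
    have "(exp (\<Sum>k=1..K. \<sigma> k a b * y (n, k)) * W a b)\<^sup>2 = exp (\<Sum>k=1..K. (2 * \<sigma> k a b) * y (n, k)) * (W a b)\<^sup>2"
      by (simp add: power_mult_distrib power2_eq_square exp_add[symmetric] sum_distrib_left[symmetric] mult_ac)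
    also have "exp (\<Sum>k=1..K. (2 * \<sigma> k a b) * y (n, k)) = (\<Prod>i\<in>J. exp ((2 * \<sigma> (snd i) a b) * y i))"
      by (simp add: exp_sum J_def prod_J)
    finally show ?thesis unfolding F_def p
      by (simp add: ennreal_mult' prod_ennreal[symmetric] mult_ac)
  qed
  have Fm: "(\<lambda>q. F (fst q) (snd q)) \<in> borel_measurable (Pi\<^sub>M J (\<lambda>_. nu \<tau>) \<Otimes>\<^sub>M lborel)"
  proof -
    have "(\<lambda>q. F (fst q) (snd q)) \<in> borel_measurable (Pi\<^sub>M J (\<lambda>_. nu \<tau>) \<Otimes>\<^sub>M (borel :: ((real^'d) \<times> (real^'d)) measure))"
    proof -
      let ?P = "Pi\<^sub>M J (\<lambda>_. nu \<tau>) \<Otimes>\<^sub>M (borel :: ((real^'d) \<times> (real^'d)) measure)"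
      have sk: "(\<lambda>q. \<sigma> k (fst (snd q)) (snd (snd q))) \<in> borel_measurable ?P" if "k \<in> {1..K}" for k
        using measurable_comp[OF measurable_snd \<sigma>m[OF that]] by (simp add: comp_def split_beta')
      have zk: "(\<lambda>q. fst q i) \<in> borel_measurable ?P" if "i \<in> J" for i
      proof -
        have "(\<lambda>z. z i) \<in> borel_measurable (Pi\<^sub>M J (\<lambda>_. nu \<tau>))"
          using measurable_component_singleton[of i J "\<lambda>_. nu \<tau>"] that by (simp add: measurable_cong_sets[OF refl sets_nu])
        then show ?thesis using measurable_comp[OF measurable_fst] by (simp add: comp_def)
      qed
      have W2: "(\<lambda>q. ennreal ((case_prod W (snd q))\<^sup>2) * indicator CU (snd q)) \<in> borel_measurable ?P"
        using measurable_comp[OF measurable_snd, of "\<lambda>p. ennreal ((case_prod W p)\<^sup>2) * indicator CU p"] Wm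
        unfolding CU_def by (simp add: comp_def)
      show ?thesis unfolding F_def
        by (intro borel_measurable_times_ennreal W2 borel_measurable_prod_ennreal
              measurable_compose[OF _ measurable_ennreal] measurable_compose[OF _ borel_measurable_exp]
              borel_measurable_times borel_measurable_const sk zk) (auto simp: J_def)
    qed
    moreover have "measurable (Pi\<^sub>M J (\<lambda>_. nu \<tau>) \<Otimes>\<^sub>M (lborel :: ((real^'d) \<times> (real^'d)) measure)) (borel :: ennreal measure)
        = measurable (Pi\<^sub>M J (\<lambda>_. nu \<tau>) \<Otimes>\<^sub>M (borel :: ((real^'d) \<times> (real^'d)) measure)) borel"
      by (intro measurable_cong_sets sets_pair_measure_cong) auto
    ultimately show ?thesis by simp
  qed
  have "(\<integral>\<^sup>+y. L2N (\<lambda>a b. exp (\<Sum>k=1..K. \<sigma> k a b * y (n, k)) * W a b) \<partial>Pi\<^sub>M J (\<lambda>_. nu \<tau>))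
      = (\<integral>\<^sup>+y. \<integral>\<^sup>+p. F y p \<partial>lborel \<partial>Pi\<^sub>M J (\<lambda>_. nu \<tau>))"
    unfolding L2N_def mu_xv_lborel CU_def[symmetric] pw ..
  also have "\<dots> = (\<integral>\<^sup>+p. \<integral>\<^sup>+y. F y p \<partial>Pi\<^sub>M J (\<lambda>_. nu \<tau>) \<partial>lborel)"
    using PL.Fubini[OF Fm] by simp
  also have "\<dots> = (\<integral>\<^sup>+p. ennreal (exp (2 * s\<^sup>2 * \<tau>)) * (ennreal ((case_prod W p)\<^sup>2) * indicator CU p) \<partial>lborel)"
  proof (intro nn_integral_cong)
    fix p :: "(real^'d) \<times> (real^'d)"
    have "(\<integral>\<^sup>+y. F y p \<partial>Pi\<^sub>M J (\<lambda>_. nu \<tau>))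
        = (\<integral>\<^sup>+y. (\<Prod>i\<in>J. ennreal (exp ((2 * \<sigma> (snd i) (fst p) (snd p)) * y i))) \<partial>Pi\<^sub>M J (\<lambda>_. nu \<tau>)) *
          (ennreal ((case_prod W p)\<^sup>2) * indicator CU p)"
      unfolding F_def
      by (rule nn_integral_multc)
         (intro borel_measurable_prod_ennreal measurable_compose[OF _ measurable_ennreal]
              measurable_compose[OF _ borel_measurable_exp] borel_measurable_times borel_measurable_const comp_nu)
    also have "(\<integral>\<^sup>+y. (\<Prod>i\<in>J. ennreal (exp ((2 * \<sigma> (snd i) (fst p) (snd p)) * y i))) \<partial>Pi\<^sub>M J (\<lambda>_. nu \<tau>))
        = (\<Prod>i\<in>J. \<integral>\<^sup>+t. ennreal (exp ((2 * \<sigma> (snd i) (fst p) (snd p)) * t)) \<partial>nu \<tau>)"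
      by (rule product_nn_integral_prod) (auto simp: J_def measurable_cong_sets[OF sets_nu refl])
    also have "\<dots> = (\<Prod>i\<in>J. ennreal (exp (2 * (\<sigma> (snd i) (fst p) (snd p))\<^sup>2 * \<tau>)))"
    proof (intro prod.cong refl)
      fix i
      have "(2 * \<sigma> (snd i) (fst p) (snd p))\<^sup>2 * (sqrt \<tau>)\<^sup>2 / 2 = 2 * (\<sigma> (snd i) (fst p) (snd p))\<^sup>2 * \<tau>"
        using tau by (simp add: power_mult_distrib)
      then show "(\<integral>\<^sup>+t. ennreal (exp ((2 * \<sigma> (snd i) (fst p) (snd p)) * t)) \<partial>nu \<tau>) = ennreal (exp (2 * (\<sigma> (snd i) (fst p) (snd p))\<^sup>2 * \<tau>))"
        unfolding nu_def using normal_mgf[of "sqrt \<tau>" "2 * \<sigma> (snd i) (fst p) (snd p)"] tau by simp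
    qed
    also have "\<dots> = ennreal (exp (2 * s\<^sup>2 * \<tau>))"
    proof -
      have "(\<Prod>i\<in>J. ennreal (exp (2 * (\<sigma> (snd i) (fst p) (snd p))\<^sup>2 * \<tau>)))
          = ennreal (exp (\<Sum>k=1..K. 2 * (\<sigma> k (fst p) (snd p))\<^sup>2 * \<tau>))"
        by (simp add: prod_ennreal exp_sum J_def prod_J)
      also have "(\<Sum>k=1..K. 2 * (\<sigma> k (fst p) (snd p))\<^sup>2 * \<tau>) = 2 * s\<^sup>2 * \<tau>"
        using ssum[of "fst p" "snd p"] by (simp add: sum_distrib_left[symmetric] sum_distrib_right[symmetric])
      finally show ?thesis .
    qed
    finally show "(\<integral>\<^sup>+y. F y p \<partial>Pi\<^sub>M J (\<lambda>_. nu \<tau>)) = ennreal (exp (2 * s\<^sup>2 * \<tau>)) * (ennreal ((case_prod W p)\<^sup>2) * indicator CU p)"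
      by (simp add: mult_ac)
  qed
  also have "\<dots> = ennreal (exp (2 * s\<^sup>2 * \<tau>)) * L2N W"
    unfolding L2N_def mu_xv_lborel CU_def
    by (rule nn_integral_cmult) (use Wm in simp)
  finally show ?thesis unfolding J_def .
qed

lemma L2N_Gs_measurable:
  fixes E :: "real^'d \<Rightarrow> real^'d" and f0 :: "real^'d \<Rightarrow> real^'d \<Rightarrow> real"
  assumes f0m: "case_prod f0 \<in> borel_measurable borel"
    and \<sigma>m: "\<And>k. k \<in> {1..K} \<Longrightarrow> case_prod (\<sigma> k) \<in> borel_measurable borel"
    and Em: "E \<in> borel_measurable borel"
    and I: "{..<n} \<times> {1..K} \<subseteq> I"
  shows "(\<lambda>z. L2N (Gs E \<sigma> K \<tau> f0 n z)) \<in> borel_measurable (Pi\<^sub>M I (\<lambda>_. nu t))"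
proof -
  let ?P = "Pi\<^sub>M I (\<lambda>_. nu t) \<Otimes>\<^sub>M (borel :: ((real^'d) \<times> (real^'d)) measure)"
  have G: "(\<lambda>q. Gs E \<sigma> K \<tau> f0 n (fst q) (fst (snd q)) (snd (snd q))) \<in> borel_measurable ?P"
    by (rule Gs_measurable[OF f0m \<sigma>m Em I])
  have "(\<lambda>q. ennreal ((Gs E \<sigma> K \<tau> f0 n (fst q) (fst (snd q)) (snd (snd q)))\<^sup>2) * indicator (cbox 0 One \<times> UNIV) (snd q))
      \<in> borel_measurable ?P"
    using G by measurable
  moreover have "measurable (Pi\<^sub>M I (\<lambda>_. nu t) \<Otimes>\<^sub>M (lborel :: ((real^'d) \<times> (real^'d)) measure)) (borel :: ennreal measure)
        = measurable ?P borel"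
    by (intro measurable_cong_sets sets_pair_measure_cong) auto
  ultimately have "(\<lambda>q. ennreal ((Gs E \<sigma> K \<tau> f0 n (fst q) (fst (snd q)) (snd (snd q)))\<^sup>2) * indicator (cbox 0 One \<times> UNIV) (snd q))
      \<in> borel_measurable (Pi\<^sub>M I (\<lambda>_. nu t) \<Otimes>\<^sub>M (lborel :: ((real^'d) \<times> (real^'d)) measure))"
    by simp
  from lborel.borel_measurable_nn_integral_fst[OF this]
  show ?thesis unfolding L2N_def mu_xv_lborel by (simp add: split_beta')
qed

lemma Gs_borel_fixed:
  fixes E :: "real^'d \<Rightarrow> real^'d" and f0 :: "real^'d \<Rightarrow> real^'d \<Rightarrow> real"
  assumes f0m: "case_prod f0 \<in> borel_measurable borel"
    and \<sigma>m: "\<And>k. k \<in> {1..K} \<Longrightarrow> case_prod (\<sigma> k) \<in> borel_measurable borel"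
    and Em: "E \<in> borel_measurable borel"
    and I: "{..<n} \<times> {1..K} \<subseteq> I"
    and x: "x \<in> space (Pi\<^sub>M I (\<lambda>_. nu t))"
  shows "case_prod (Gs E \<sigma> K \<tau> f0 n x) \<in> borel_measurable borel"
proof -
  have G: "(\<lambda>q. Gs E \<sigma> K \<tau> f0 n (fst q) (fst (snd q)) (snd (snd q)))
      \<in> borel_measurable (Pi\<^sub>M I (\<lambda>_. nu t) \<Otimes>\<^sub>M (borel :: ((real^'d) \<times> (real^'d)) measure))"
    by (rule Gs_measurable[OF f0m \<sigma>m Em I])
  from measurable_comp[OF measurable_Pair1'[OF x] G]
  show ?thesis by (simp add: comp_def split_beta')
qed

lemma Q_rec:
  fixes E :: "real^'d \<Rightarrow> real^'d" and f0 :: "real^'d \<Rightarrow> real^'d \<Rightarrow> real"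
    and \<sigma> :: "nat \<Rightarrow> real^'d \<Rightarrow> real^'d \<Rightarrow> real"
  assumes f0m: "case_prod f0 \<in> borel_measurable borel"
    and \<sigma>m: "\<And>k. k \<in> {1..K} \<Longrightarrow> case_prod (\<sigma> k) \<in> borel_measurable borel"
    and Em: "E \<in> borel_measurable borel"
    and per: "\<forall>k\<in>{1..K}. periodic_x (\<sigma> k)" "periodic_fun E" "periodic_x f0"
    and ssum: "\<And>x v. (\<Sum>k=1..K. (\<sigma> k x v)\<^sup>2) = s\<^sup>2"
    and tau: "0 < \<tau>"
  shows "(\<integral>\<^sup>+z. L2N (Gs E \<sigma> K \<tau> f0 (Suc n) z) \<partial>Pi\<^sub>M ({..<Suc n} \<times> {1..K}) (\<lambda>_. nu \<tau>))
       = ennreal (exp (2 * s\<^sup>2 * \<tau>)) * (\<integral>\<^sup>+z. L2N (Gs E \<sigma> K \<tau> f0 n z) \<partial>Pi\<^sub>M ({..<n} \<times> {1..K}) (\<lambda>_. nu \<tau>))"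
proof -
  interpret product_sigma_finite "\<lambda>_. nu \<tau>" by (rule psf_nu[OF tau])
  define N where "N = {..<n} \<times> {1..K}"
  define J where "J = {n} \<times> {1..K}"
  have NJ: "{..<Suc n} \<times> {1..K} = N \<union> J" by (auto simp: N_def J_def)
  have disj: "N \<inter> J = {}" by (auto simp: N_def J_def)
  have "(\<integral>\<^sup>+z. L2N (Gs E \<sigma> K \<tau> f0 (Suc n) z) \<partial>Pi\<^sub>M ({..<Suc n} \<times> {1..K}) (\<lambda>_. nu \<tau>))
      = (\<integral>\<^sup>+x. \<integral>\<^sup>+y. L2N (Gs E \<sigma> K \<tau> f0 (Suc n) (merge N J (x, y))) \<partial>Pi\<^sub>M J (\<lambda>_. nu \<tau>) \<partial>Pi\<^sub>M N (\<lambda>_. nu \<tau>))"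
    unfolding NJ
  proof (rule product_nn_integral_fold[OF disj])
    show "finite N" "finite J" by (simp_all add: N_def J_def)
    show "(\<lambda>z. L2N (Gs E \<sigma> K \<tau> f0 (Suc n) z)) \<in> borel_measurable (Pi\<^sub>M (N \<union> J) (\<lambda>_. nu \<tau>))"
      by (rule L2N_Gs_measurable[OF f0m \<sigma>m Em]) (auto simp: N_def J_def)
  qed
  also have "\<dots> = (\<integral>\<^sup>+x. ennreal (exp (2 * s\<^sup>2 * \<tau>)) * L2N (Gs E \<sigma> K \<tau> f0 n x) \<partial>Pi\<^sub>M N (\<lambda>_. nu \<tau>))"
  proof (intro nn_integral_cong)
    fix x assume x: "x \<in> space (Pi\<^sub>M N (\<lambda>_. nu \<tau>))"
    let ?W = "S2 \<tau> E (S1 \<tau> (Gs E \<sigma> K \<tau> f0 n x))"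
    have gm: "case_prod (Gs E \<sigma> K \<tau> f0 n x) \<in> borel_measurable borel"
      by (rule Gs_borel_fixed[OF f0m \<sigma>m Em _ x]) (auto simp: N_def)
    have Wm: "case_prod ?W \<in> borel_measurable borel"
    proof -
      note [measurable (raw)] = measurable_app2[OF gm]
      note [measurable] = Em
      show ?thesis unfolding S2S1_eq split_beta' by measurable
    qed
    have eq: "Gs E \<sigma> K \<tau> f0 (Suc n) (merge N J (x, y)) = (\<lambda>a b. exp (\<Sum>k=1..K. \<sigma> k a b * y (n, k)) * ?W a b)" for y
    proof -
      have "Gs E \<sigma> K \<tau> f0 n (merge N J (x, y)) = Gs E \<sigma> K \<tau> f0 n x"
        by (rule Gs_cong) (simp add: N_def J_def merge_def)
      moreover have "merge N J (x, y) (n, k) = y (n, k)" if "k \<in> {1..K}" for k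
        using that by (simp add: N_def J_def merge_def)
      ultimately show ?thesis by (auto intro!: sum.cong)
    qed
    show "(\<integral>\<^sup>+y. L2N (Gs E \<sigma> K \<tau> f0 (Suc n) (merge N J (x, y))) \<partial>Pi\<^sub>M J (\<lambda>_. nu \<tau>))
        = ennreal (exp (2 * s\<^sup>2 * \<tau>)) * L2N (Gs E \<sigma> K \<tau> f0 n x)"
      unfolding eq unfolding J_def
      using mgf_step[OF Wm \<sigma>m ssum tau, of n] L2N_S2S1[OF gm Em Gs_periodic[OF per]] by simp
  qed
  also have "\<dots> = ennreal (exp (2 * s\<^sup>2 * \<tau>)) * (\<integral>\<^sup>+x. L2N (Gs E \<sigma> K \<tau> f0 n x) \<partial>Pi\<^sub>M N (\<lambda>_. nu \<tau>))"
    by (rule nn_integral_cmult) (rule L2N_Gs_measurable[OF f0m \<sigma>m Em], auto simp: N_def)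
  finally show ?thesis unfolding N_def .
qed

lemma space_nu[simp]: "space (nu t) = UNIV"
  using sets_eq_imp_space_eq[OF sets_nu[of t]] by simp

lemma measurable_vec_chi:
  assumes "\<And>i. f i \<in> borel_measurable M"
  shows "(\<lambda>x. (\<chi> i. f i x) :: real^'n) \<in> borel_measurable M"
proof (subst borel_measurable_euclidean_space, intro ballI)
  fix b :: "real^'n" assume "b \<in> Basis"
  then obtain i where b: "b = axis i 1" unfolding Basis_vec_def by auto
  show "(\<lambda>x. (\<chi> i. f i x) \<bullet> b) \<in> borel_measurable M"
    unfolding b inner_axis using assms[of i] by simp
qed

lemma f0_borel:
  fixes f0 :: "real^'d \<Rightarrow> real^'d \<Rightarrow> real"
  assumes m: "case_prod f0 \<in> borel_measurable mu_xv" and per: "periodic_x f0"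
  shows "case_prod f0 \<in> borel_measurable borel"
proof -
  define fl :: "real^'d \<Rightarrow> real^'d" where "fl x = (\<chi> i. real_of_int (floor (x $ i)))" for x
  have flm: "fl \<in> borel_measurable borel"
    unfolding fl_def by (intro measurable_vec_chi) measurable
  note [measurable] = flm
  define \<phi> where "\<phi> p = (fst p - fl (fst p), snd p)" for p :: "(real^'d) \<times> (real^'d)"
  have cb: "x - fl x \<in> cbox 0 One" for x
  proof -
    have "\<forall>i. 0 \<le> (x - fl x) $ i \<and> (x - fl x) $ i \<le> 1"
      by (auto simp: fl_def) linarith+
    moreover have "x - fl x \<in> cbox 0 One \<longleftrightarrow> (\<forall>i. 0 \<le> (x - fl x)$i \<and> (x - fl x)$i \<le> 1)"
      using mem_box_cart(2)[of "x - fl x" 0 One] by (simp only: one_nth zero_index)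
    ultimately show ?thesis by blast
  qed
  have phim: "\<phi> \<in> borel_measurable borel" unfolding \<phi>_def[abs_def]
    by (intro borel_measurable_Pair borel_measurable_diff measurable_compose[OF borel_fst flm] borel_fst borel_snd)
  have "\<phi> \<in> measurable borel mu_xv"
    unfolding mu_xv_def
  proof (rule measurable_restrict_space2)
    show "\<phi> \<in> space borel \<rightarrow> cbox 0 One \<times> UNIV" by (auto simp: \<phi>_def cb)
    show "\<phi> \<in> measurable borel (lborel \<Otimes>\<^sub>M lborel)" using phim by (simp add: lborel_prod)
  qed
  from measurable_comp[OF this m]
  have "case_prod f0 \<circ> \<phi> \<in> borel_measurable borel" .
  moreover have "case_prod f0 \<circ> \<phi> = case_prod f0"
  proof
    fix p :: "(real^'d) \<times> (real^'d)"
    obtain x v where p: "p = (x, v)" by (cases p)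
    have "int_vec (fl x)" by (simp add: int_vec_def fl_def)
    then have "f0 (x - fl x + fl x) v = f0 (x - fl x) v" using per unfolding periodic_x_def by blast
    then show "(case_prod f0 \<circ> \<phi>) p = case_prod f0 p" by (simp add: p \<phi>_def)
  qed
  ultimately show ?thesis by simp
qed

lemma smooth_borel:
  fixes f :: "'a::euclidean_space \<Rightarrow> real"
  assumes "smooth_fun f"
  shows "continuous_on UNIV f" "f \<in> borel_measurable borel"
proof -
  have "\<forall>x. f differentiable (at x)" using assms by (cases rule: smooth_fun.cases) auto
  then show c: "continuous_on UNIV f"
    by (intro continuous_at_imp_continuous_on) (auto intro: differentiable_imp_continuous_within)
  then show "f \<in> borel_measurable borel" by (rule borel_measurable_continuous_onI)
qed

lemma E_borel:
  fixes E :: "real^'d \<Rightarrow> real^'d"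
  assumes "\<forall>i. smooth_fun (\<lambda>x. E x $ i)"
  shows "E \<in> borel_measurable borel"
proof -
  have "(\<lambda>x. \<chi> i. E x $ i) \<in> borel_measurable borel"
    using assms smooth_borel(2) by (intro measurable_vec_chi) blast
  then show ?thesis by simp
qed

lemma Gs_borel_any:
  fixes E :: "real^'d \<Rightarrow> real^'d" and f0 :: "real^'d \<Rightarrow> real^'d \<Rightarrow> real"
  assumes f0m: "case_prod f0 \<in> borel_measurable borel"
    and \<sigma>m: "\<And>k. k \<in> {1..K} \<Longrightarrow> case_prod (\<sigma> k) \<in> borel_measurable borel"
    and Em: "E \<in> borel_measurable borel"
  shows "case_prod (Gs E \<sigma> K \<tau> f0 n z) \<in> borel_measurable borel"
proof -
  have "Gs E \<sigma> K \<tau> f0 n z = Gs E \<sigma> K \<tau> f0 n (restrict z ({..<n} \<times> {1..K}))"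
    by (rule Gs_cong) auto
  moreover have "case_prod (Gs E \<sigma> K \<tau> f0 n (restrict z ({..<n} \<times> {1..K}))) \<in> borel_measurable borel"
    by (rule Gs_borel_fixed[OF f0m \<sigma>m Em, where t=1]) (auto simp: space_PiM)
  ultimately show ?thesis by simp
qed

lemma L2N_Gs_finite:
  fixes E :: "real^'d \<Rightarrow> real^'d" and f0 :: "real^'d \<Rightarrow> real^'d \<Rightarrow> real"
    and \<sigma> :: "nat \<Rightarrow> real^'d \<Rightarrow> real^'d \<Rightarrow> real"
  assumes f0m: "case_prod f0 \<in> borel_measurable borel"
    and \<sigma>m: "\<And>k. k \<in> {1..K} \<Longrightarrow> case_prod (\<sigma> k) \<in> borel_measurable borel"
    and Em: "E \<in> borel_measurable borel"
    and per: "\<forall>k\<in>{1..K}. periodic_x (\<sigma> k)" "periodic_fun E" "periodic_x f0"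
    and bnd: "\<And>k x v. k \<in> {1..K} \<Longrightarrow> \<bar>\<sigma> k x v\<bar> \<le> B k"
    and fin: "L2N f0 < \<infinity>"
  shows "L2N (Gs E \<sigma> K \<tau> f0 n z) < \<infinity>"
proof (induction n)
  case 0 then show ?case using fin by simp
next
  case (Suc n)
  let ?g = "Gs E \<sigma> K \<tau> f0 n z"
  let ?W = "S2 \<tau> E (S1 \<tau> ?g)"
  define C where "C = exp (2 * (\<Sum>k=1..K. B k * \<bar>z (n, k)\<bar>))"
  have gm: "case_prod ?g \<in> borel_measurable borel" by (rule Gs_borel_any[OF f0m \<sigma>m Em])
  have pt: "(exp (\<Sum>k=1..K. \<sigma> k x v * z (n, k)) * w)\<^sup>2 \<le> C * w\<^sup>2" for x v w
  proof -
    have "(\<Sum>k=1..K. \<sigma> k x v * z (n, k)) \<le> (\<Sum>k=1..K. B k * \<bar>z (n, k)\<bar>)"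
    proof (intro sum_mono)
      fix k assume k: "k \<in> {1..K}"
      have "\<sigma> k x v * z (n, k) \<le> \<bar>\<sigma> k x v\<bar> * \<bar>z (n, k)\<bar>" by (simp add: abs_mult[symmetric])
      also have "\<dots> \<le> B k * \<bar>z (n, k)\<bar>" using bnd[OF k] by (intro mult_right_mono) auto
      finally show "\<sigma> k x v * z (n, k) \<le> B k * \<bar>z (n, k)\<bar>" .
    qed
    then have "exp (\<Sum>k=1..K. \<sigma> k x v * z (n, k)) ^ 2 \<le> C"
      unfolding C_def by (simp add: exp_double[symmetric] power2_eq_square exp_add[symmetric])
    then show ?thesis by (simp add: power_mult_distrib mult_right_mono)
  qed
  have "L2N (Gs E \<sigma> K \<tau> f0 (Suc n) z) \<le> (\<integral>\<^sup>+p. ennreal C * ennreal ((case_prod ?W p)\<^sup>2) \<partial>mu_xv)"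
    unfolding L2N_def
  proof (intro nn_integral_mono)
    fix p :: "(real^'d) \<times> (real^'d)"
    have "C \<ge> 0" by (simp add: C_def)
    have "ennreal ((case_prod (Gs E \<sigma> K \<tau> f0 (Suc n) z) p)\<^sup>2) \<le> ennreal (C * (case_prod ?W p)\<^sup>2)"
      by (rule ennreal_leI) (unfold Gs.simps split_beta', rule pt)
    also have "\<dots> = ennreal C * ennreal ((case_prod ?W p)\<^sup>2)"
      using \<open>C \<ge> 0\<close> by (simp add: ennreal_mult)
    finally show "ennreal ((case_prod (Gs E \<sigma> K \<tau> f0 (Suc n) z) p)\<^sup>2) \<le> ennreal C * ennreal ((case_prod ?W p)\<^sup>2)" .
  qed
  also have "\<dots> = ennreal C * L2N ?W"
  proof -
    have Wm: "case_prod ?W \<in> borel_measurable borel"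
    proof -
      note [measurable (raw)] = measurable_app2[OF gm]
      note [measurable] = Em
      show ?thesis unfolding S2S1_eq split_beta' by measurable
    qed
    have "(\<lambda>p. ennreal ((case_prod ?W p)\<^sup>2) * indicator (cbox 0 One \<times> UNIV) p) \<in> borel_measurable borel"
      using Wm by measurable
    then show ?thesis unfolding L2N_def mu_xv_lborel
      by (subst nn_integral_cmult[symmetric]) (auto simp: mult_ac)
  qed
  also have "L2N ?W = L2N ?g" by (rule L2N_S2S1[OF gm Em Gs_periodic[OF per]])
  finally show ?case using Suc by (simp add: ennreal_mult_less_top order_le_less_trans)
qed

lemma L2N_fin_of_L2:
  assumes "in_L2xv f0"
  shows "L2N f0 < \<infinity>"
proof -
  have "integrable mu_xv (\<lambda>(x,v). (f0 x v)\<^sup>2)" using assms by (simp add: in_L2xv_def)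
  then have "(\<integral>\<^sup>+p. ennreal (norm ((\<lambda>(x,v). (f0 x v)\<^sup>2) p)) \<partial>mu_xv) < \<infinity>"
    by (simp add: integrable_iff_bounded)
  then show ?thesis unfolding L2N_def by (simp add: split_beta')
qed

lemma L2xv_sq_eq:
  assumes "case_prod g \<in> borel_measurable mu_xv"
  shows "L2xv_sq g = enn2real (L2N g)"
  unfolding L2xv_sq_def L2N_def
  by (rule integral_eq_nn_integral) (use assms in auto)

lemma Q_closed:
  fixes E :: "real^'d \<Rightarrow> real^'d" and f0 :: "real^'d \<Rightarrow> real^'d \<Rightarrow> real"
    and \<sigma> :: "nat \<Rightarrow> real^'d \<Rightarrow> real^'d \<Rightarrow> real"
  assumes f0m: "case_prod f0 \<in> borel_measurable borel"
    and \<sigma>m: "\<And>k. k \<in> {1..K} \<Longrightarrow> case_prod (\<sigma> k) \<in> borel_measurable borel"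
    and Em: "E \<in> borel_measurable borel"
    and per: "\<forall>k\<in>{1..K}. periodic_x (\<sigma> k)" "periodic_fun E" "periodic_x f0"
    and ssum: "\<And>x v. (\<Sum>k=1..K. (\<sigma> k x v)\<^sup>2) = s\<^sup>2"
    and tau: "0 < \<tau>"
  shows "(\<integral>\<^sup>+z. L2N (Gs E \<sigma> K \<tau> f0 n z) \<partial>Pi\<^sub>M ({..<n} \<times> {1..K}) (\<lambda>_. nu \<tau>))
       = ennreal (exp (2 * s\<^sup>2 * (real n * \<tau>))) * L2N f0"
proof (induction n)
  case 0
  then show ?case by (simp add: PiM_empty)
next
  case (Suc n)
  have "ennreal (exp (2 * s\<^sup>2 * \<tau>)) * ennreal (exp (2 * s\<^sup>2 * (real n * \<tau>)))
      = ennreal (exp (2 * s\<^sup>2 * (real (Suc n) * \<tau>)))"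
    by (simp add: ennreal_mult[symmetric] exp_add[symmetric] algebra_simps)
  have "(\<integral>\<^sup>+z. L2N (Gs E \<sigma> K \<tau> f0 (Suc n) z) \<partial>Pi\<^sub>M ({..<Suc n} \<times> {1..K}) (\<lambda>_. nu \<tau>))
       = ennreal (exp (2 * s\<^sup>2 * \<tau>)) * (\<integral>\<^sup>+z. L2N (Gs E \<sigma> K \<tau> f0 n z) \<partial>Pi\<^sub>M ({..<n} \<times> {1..K}) (\<lambda>_. nu \<tau>))"
    by (rule Q_rec[OF f0m \<sigma>m Em per ssum tau])
  also have "\<dots> = ennreal (exp (2 * s\<^sup>2 * \<tau>)) * (ennreal (exp (2 * s\<^sup>2 * (real n * \<tau>))) * L2N f0)"
    by (simp only: Suc)
  also have "\<dots> = ennreal (exp (2 * s\<^sup>2 * (real (Suc n) * \<tau>))) * L2N f0"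
    by (metis \<open>ennreal (exp (2 * s\<^sup>2 * \<tau>)) * ennreal (exp (2 * s\<^sup>2 * (real n * \<tau>))) = _\<close> mult.assoc)
  finally show ?case .
qed

theorem proposition5p4:
  fixes E :: "real^'d \<Rightarrow> real^'d"
    and \<sigma> :: "nat \<Rightarrow> real^'d \<Rightarrow> real^'d \<Rightarrow> real"
    and K :: nat
    and M :: "'w measure"
    and \<beta> :: "nat \<Rightarrow> real \<Rightarrow> 'w \<Rightarrow> real"
    and f0 :: "real^'d \<Rightarrow> real^'d \<Rightarrow> real"
    and \<tau> :: real
  assumes "prob_space M"
    and "\<forall>k\<in>{1..K}. std_wiener M (\<beta> k)"
    and "prob_space.indep_vars M (\<lambda>_. Pi\<^sub>M UNIV (\<lambda>_. borel)) (\<lambda>k \<omega> t. \<beta> k t \<omega>) {1..K}"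
    and "\<forall>i. smooth_fun (\<lambda>x. E x $ i)"
    and "periodic_fun E"
    and "\<forall>k\<in>{1..K}. smooth_fun (case_prod (\<sigma> k)) \<and> bounded (range (case_prod (\<sigma> k)))
                       \<and> periodic_x (\<sigma> k)"
    and "periodic_x f0"
    and "0 < \<tau>" and "\<tau> < 1"
  shows "((\<forall>x v. f0 x v \<ge> 0) \<longrightarrow>
            (\<forall>n. AE \<omega> in M. \<forall>x v. fmS E \<sigma> K \<beta> \<tau> f0 n \<omega> x v \<ge> 0))
       \<and> (\<forall>s::real. in_L2xv f0 \<and> (\<forall>x v. (\<Sum>k=1..K. (\<sigma> k x v)\<^sup>2) = s\<^sup>2) \<longrightarrow>
            (\<forall>n. (AE \<omega> in M. in_L2xv (fmS E \<sigma> K \<beta> \<tau> f0 n \<omega>))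
               \<and> (\<lambda>(\<omega>, x, v). fmS E \<sigma> K \<beta> \<tau> f0 n \<omega> x v) \<in> borel_measurable (M \<Otimes>\<^sub>M mu_xv)
               \<and> integrable M (\<lambda>\<omega>. L2xv_sq (fmS E \<sigma> K \<beta> \<tau> f0 n \<omega>))
               \<and> (\<integral>\<omega>. L2xv_sq (fmS E \<sigma> K \<beta> \<tau> f0 n \<omega>) \<partial>M)
                   = exp (2 * s\<^sup>2 * (real n * \<tau>)) * L2xv_sq f0))"
proof -
  note P = assms(1) and W = assms(2) and ind = assms(3) and tau = assms(8)
  interpret prob_space M by (rule P)
  have perS: "\<forall>k\<in>{1..K}. periodic_x (\<sigma> k)" using assms(6) by blast
  note per = perS assms(5) assms(7)
  have \<sigma>m: "case_prod (\<sigma> k) \<in> borel_measurable borel" if "k \<in> {1..K}" for k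
    using assms(6) that smooth_borel(2) by blast
  have Em: "E \<in> borel_measurable borel" by (rule E_borel[OF assms(4)])
  have "\<forall>k\<in>{1..K}. \<exists>b. \<forall>x v. \<bar>\<sigma> k x v\<bar> \<le> b"
  proof
    fix k assume "k \<in> {1..K}"
    then have "bounded (range (case_prod (\<sigma> k)))" using assms(6) by blast
    then obtain b where "\<forall>y\<in>range (case_prod (\<sigma> k)). norm y \<le> b" unfolding bounded_iff by blast
    then have "\<forall>x v. \<bar>\<sigma> k x v\<bar> \<le> b" by (metis UNIV_I case_prod_conv image_eqI real_norm_def)
    then show "\<exists>b. \<forall>x v. \<bar>\<sigma> k x v\<bar> \<le> b" ..
  qed
  then obtain B where bnd: "\<And>k x v. k \<in> {1..K} \<Longrightarrow> \<bar>\<sigma> k x v\<bar> \<le> B k"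
    using bchoice[of "{1..K}" "\<lambda>k b. \<forall>x v. \<bar>\<sigma> k x v\<bar> \<le> b"] by blast
  have part1: "(\<forall>x v. f0 x v \<ge> 0) \<longrightarrow> (\<forall>n. AE \<omega> in M. \<forall>x v. fmS E \<sigma> K \<beta> \<tau> f0 n \<omega> x v \<ge> 0)"
  proof (intro impI allI, rule AE_I2)
    fix n \<omega> assume f0pos: "\<forall>x v. f0 x v \<ge> 0" and "\<omega> \<in> space M"
    show "\<forall>x v. fmS E \<sigma> K \<beta> \<tau> f0 n \<omega> x v \<ge> 0"
      by (induction n) (use f0pos in \<open>auto simp: S1_def S2_def intro!: mult_nonneg_nonneg\<close>)
  qed
  have part2: "\<forall>s::real. in_L2xv f0 \<and> (\<forall>x v. (\<Sum>k=1..K. (\<sigma> k x v)\<^sup>2) = s\<^sup>2) \<longrightarrow>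
            (\<forall>n. (AE \<omega> in M. in_L2xv (fmS E \<sigma> K \<beta> \<tau> f0 n \<omega>))
               \<and> (\<lambda>(\<omega>, x, v). fmS E \<sigma> K \<beta> \<tau> f0 n \<omega> x v) \<in> borel_measurable (M \<Otimes>\<^sub>M mu_xv)
               \<and> integrable M (\<lambda>\<omega>. L2xv_sq (fmS E \<sigma> K \<beta> \<tau> f0 n \<omega>))
               \<and> (\<integral>\<omega>. L2xv_sq (fmS E \<sigma> K \<beta> \<tau> f0 n \<omega>) \<partial>M)
                   = exp (2 * s\<^sup>2 * (real n * \<tau>)) * L2xv_sq f0)"
  proof (intro allI impI)
    fix s :: real and n :: nat
    assume H: "in_L2xv f0 \<and> (\<forall>x v. (\<Sum>k=1..K. (\<sigma> k x v)\<^sup>2) = s\<^sup>2)"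
    then have L2f0: "in_L2xv f0" and ssum: "\<And>x v. (\<Sum>k=1..K. (\<sigma> k x v)\<^sup>2) = s\<^sup>2" by auto
    have f0mu: "case_prod f0 \<in> borel_measurable mu_xv" using L2f0 by (simp add: in_L2xv_def)
    have f0m: "case_prod f0 \<in> borel_measurable borel" by (rule f0_borel[OF f0mu assms(7)])
    have fin0: "L2N f0 < \<infinity>" by (rule L2N_fin_of_L2[OF L2f0])
    define N where "N = {..<n} \<times> {1..K}"
    define Zr where "Zr \<omega> = (\<lambda>i\<in>N. \<beta> (snd i) (real (Suc (fst i)) * \<tau>) \<omega> - \<beta> (snd i) (real (fst i) * \<tau>) \<omega>)" for \<omega>
    have fmS_eq: "fmS E \<sigma> K \<beta> \<tau> f0 n \<omega> = Gs E \<sigma> K \<tau> f0 n (Zr \<omega>)" for \<omega>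
      unfolding fmS_Gs Zr_def by (rule Gs_cong) (auto simp: N_def)
    have bm: "\<beta> k t \<in> borel_measurable M" if "k \<in> {1..K}" for k t
      using W that unfolding std_wiener_def by blast
    have Zm: "Zr \<in> measurable M (Pi\<^sub>M N (\<lambda>_. nu \<tau>))"
      unfolding Zr_def
      by (rule measurable_restrict) (auto simp: N_def measurable_cong_sets[OF refl sets_nu] intro!: borel_measurable_diff bm)
    have distr: "distr M (Pi\<^sub>M N (\<lambda>_. nu \<tau>)) Zr = Pi\<^sub>M N (\<lambda>_. nu \<tau>)"
      unfolding Zr_def N_def by (rule increments_distr[OF P W ind tau])
    have gm: "case_prod (fmS E \<sigma> K \<beta> \<tau> f0 n \<omega>) \<in> borel_measurable borel" for \<omega>
      unfolding fmS_eq by (rule Gs_borel_any[OF f0m \<sigma>m Em])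
    have idm: "(\<lambda>p. p) \<in> measurable mu_xv (borel :: ((real^'d) \<times> (real^'d)) measure)"
      unfolding mu_xv_def by (rule measurable_restrict_space1) (simp add: lborel_prod)
    have gmu: "case_prod (fmS E \<sigma> K \<beta> \<tau> f0 n \<omega>) \<in> borel_measurable mu_xv" for \<omega>
      using measurable_comp[OF idm gm[of \<omega>]] by (simp add: comp_def)
    have finw: "L2N (fmS E \<sigma> K \<beta> \<tau> f0 n \<omega>) < \<infinity>" for \<omega>
      unfolding fmS_eq by (rule L2N_Gs_finite[OF f0m \<sigma>m Em per bnd fin0])
    have L2w: "in_L2xv (fmS E \<sigma> K \<beta> \<tau> f0 n \<omega>)" for \<omega>
    proof -
      have m2: "(\<lambda>(x,v). (fmS E \<sigma> K \<beta> \<tau> f0 n \<omega> x v)\<^sup>2) \<in> borel_measurable mu_xv"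
        using borel_measurable_power[OF gmu[of \<omega>], of 2] by (simp add: split_beta')
      have "(\<integral>\<^sup>+p. ennreal (norm ((\<lambda>(x,v). (fmS E \<sigma> K \<beta> \<tau> f0 n \<omega> x v)\<^sup>2) p)) \<partial>mu_xv) < \<infinity>"
        using finw[of \<omega>] unfolding L2N_def by (simp add: split_beta')
      then show ?thesis using gmu m2 unfolding in_L2xv_def by (simp add: integrable_iff_bounded)
    qed
    have jm: "(\<lambda>(\<omega>, x, v). fmS E \<sigma> K \<beta> \<tau> f0 n \<omega> x v) \<in> borel_measurable (M \<Otimes>\<^sub>M mu_xv)"
    proof -
      have G: "(\<lambda>q. Gs E \<sigma> K \<tau> f0 n (fst q) (fst (snd q)) (snd (snd q)))
          \<in> borel_measurable (Pi\<^sub>M N (\<lambda>_. nu \<tau>) \<Otimes>\<^sub>M (borel :: ((real^'d) \<times> (real^'d)) measure))"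
        by (rule Gs_measurable[OF f0m \<sigma>m Em]) (auto simp: N_def)
      have Pm: "(\<lambda>q. (Zr (fst q), snd q)) \<in> measurable (M \<Otimes>\<^sub>M mu_xv) (Pi\<^sub>M N (\<lambda>_. nu \<tau>) \<Otimes>\<^sub>M (borel :: ((real^'d) \<times> (real^'d)) measure))"
        by (intro measurable_Pair measurable_compose[OF measurable_fst Zm] measurable_compose[OF measurable_snd idm])
      from measurable_comp[OF Pm G] show ?thesis
        by (simp add: comp_def split_beta' fmS_eq)
    qed
    have Lm: "(\<lambda>\<omega>. L2N (fmS E \<sigma> K \<beta> \<tau> f0 n \<omega>)) \<in> borel_measurable M"
    proof -
      have "(\<lambda>z. L2N (Gs E \<sigma> K \<tau> f0 n z)) \<in> borel_measurable (Pi\<^sub>M N (\<lambda>_. nu \<tau>))"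
        by (rule L2N_Gs_measurable[OF f0m \<sigma>m Em]) (auto simp: N_def)
      from measurable_comp[OF Zm this] show ?thesis unfolding fmS_eq by (simp add: comp_def)
    qed
    have nnE: "(\<integral>\<^sup>+\<omega>. L2N (fmS E \<sigma> K \<beta> \<tau> f0 n \<omega>) \<partial>M) = ennreal (exp (2 * s\<^sup>2 * (real n * \<tau>))) * L2N f0"
    proof -
      have "(\<integral>\<^sup>+\<omega>. L2N (fmS E \<sigma> K \<beta> \<tau> f0 n \<omega>) \<partial>M) = (\<integral>\<^sup>+\<omega>. L2N (Gs E \<sigma> K \<tau> f0 n (Zr \<omega>)) \<partial>M)"
        by (simp add: fmS_eq)
      also have "\<dots> = (\<integral>\<^sup>+z. L2N (Gs E \<sigma> K \<tau> f0 n z) \<partial>distr M (Pi\<^sub>M N (\<lambda>_. nu \<tau>)) Zr)"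
      proof -
        have "(\<lambda>z. L2N (Gs E \<sigma> K \<tau> f0 n z)) \<in> borel_measurable (Pi\<^sub>M N (\<lambda>_. nu \<tau>))"
          by (rule L2N_Gs_measurable[OF f0m \<sigma>m Em]) (auto simp: N_def)
        with nn_integral_distr[OF Zm, of "\<lambda>z. L2N (Gs E \<sigma> K \<tau> f0 n z)"] show ?thesis by simp
      qed
      also have "\<dots> = ennreal (exp (2 * s\<^sup>2 * (real n * \<tau>))) * L2N f0"
        unfolding distr unfolding N_def by (rule Q_closed[OF f0m \<sigma>m Em per ssum tau])
      finally show ?thesis .
    qed
    have L2eq: "L2xv_sq (fmS E \<sigma> K \<beta> \<tau> f0 n \<omega>) = enn2real (L2N (fmS E \<sigma> K \<beta> \<tau> f0 n \<omega>))" for \<omega>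
      by (rule L2xv_sq_eq[OF gmu])
    have Rm: "(\<lambda>\<omega>. L2xv_sq (fmS E \<sigma> K \<beta> \<tau> f0 n \<omega>)) \<in> borel_measurable M"
      unfolding L2eq using Lm by measurable
    have nn2: "(\<integral>\<^sup>+\<omega>. ennreal (L2xv_sq (fmS E \<sigma> K \<beta> \<tau> f0 n \<omega>)) \<partial>M) = ennreal (exp (2 * s\<^sup>2 * (real n * \<tau>))) * L2N f0"
      unfolding L2eq using finw by (simp add: ennreal_enn2real_if nnE[symmetric] less_top[symmetric])
    have int: "integrable M (\<lambda>\<omega>. L2xv_sq (fmS E \<sigma> K \<beta> \<tau> f0 n \<omega>))"
    proof -
      have "(\<integral>\<^sup>+\<omega>. ennreal (norm (L2xv_sq (fmS E \<sigma> K \<beta> \<tau> f0 n \<omega>))) \<partial>M) < \<infinity>"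
        using nn2 fin0 by (simp add: L2eq ennreal_mult_less_top)
      then show ?thesis using Rm by (simp add: integrable_iff_bounded)
    qed
    have "(\<integral>\<omega>. L2xv_sq (fmS E \<sigma> K \<beta> \<tau> f0 n \<omega>) \<partial>M)
        = enn2real (\<integral>\<^sup>+\<omega>. ennreal (L2xv_sq (fmS E \<sigma> K \<beta> \<tau> f0 n \<omega>)) \<partial>M)"
      by (rule integral_eq_nn_integral[OF Rm]) (simp add: L2eq)
    also have "\<dots> = exp (2 * s\<^sup>2 * (real n * \<tau>)) * L2xv_sq f0"
      unfolding nn2 using L2xv_sq_eq[OF f0mu] by (simp add: enn2real_mult)
    finally have inteq: "(\<integral>\<omega>. L2xv_sq (fmS E \<sigma> K \<beta> \<tau> f0 n \<omega>) \<partial>M) = exp (2 * s\<^sup>2 * (real n * \<tau>)) * L2xv_sq f0" .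
    show "(AE \<omega> in M. in_L2xv (fmS E \<sigma> K \<beta> \<tau> f0 n \<omega>))
               \<and> (\<lambda>(\<omega>, x, v). fmS E \<sigma> K \<beta> \<tau> f0 n \<omega> x v) \<in> borel_measurable (M \<Otimes>\<^sub>M mu_xv)
               \<and> integrable M (\<lambda>\<omega>. L2xv_sq (fmS E \<sigma> K \<beta> \<tau> f0 n \<omega>))
               \<and> (\<integral>\<omega>. L2xv_sq (fmS E \<sigma> K \<beta> \<tau> f0 n \<omega>) \<partial>M)
                   = exp (2 * s\<^sup>2 * (real n * \<tau>)) * L2xv_sq f0"
      using L2w jm int inteq by auto
  qed
  show ?thesis using part1 part2 by blast
qed

end
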